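(* Let $(\epsilon_i)_{i\in\mathbb{Z}}$ be i.i.d. real random variables with density $f_\epsilon$, and let $Z_k=\sum_{i=0}^\infty a_i\epsilon_{k-i}$ be a causal stationary linear process whose marginal distribution has cumulative distribution function $F_Z$ and density $f_Z$. Let $g$ be strictly increasing and differentiable, and $Y_k=g(Z_k)$. Let $\widehat g(x)=\xi_n^Y(F_Z(x))$, where $\xi_n^Y(p)=\inf\{y\mid F_n^Y(y)\ge p\}$ and $F_n^Y(y)=\frac1n\sum_{i=1}^n\mathbf{1}_{Y_i\le y}$. (i) Assume $\sup_{x\in\mathbb{R}}\big(f_\epsilon(x)+|f_\epsilon'(x)|\big)<\infty$ and that there exist $\alpha>0$, $q>2$ with $\mathbb{E}|\epsilon_k|^\alpha<\infty$ and $\sum_{i=n}^\infty|a_i|^{\min(\alpha/q,1)}=O((\log n)^{-1/q})$. Then for every $x$ with $f_Z(x)>0$, $\widehat g(x)\to g(x)$ almost surely. (ii) Assume instead that $\sup_{x\in\mathbb{R}}|f_\epsilon''(x)|<\infty$, that $\mathbb{E}|\epsilon_k|^\alpha<\infty$ for some $\alpha>0$, and that $\sum_{i=1}^\infty|a_i|^{\min(\alpha/q,1)}<\infty$ for some $q\ge2$. Let $[c,d]$ be an interval with $\inf_{c\le x\le d}f_Z(x)>0$. Then $\sup_{c\le x\le d}|\widehat g(x)-g(x)|\to0$ almost surely. *)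

theory Defs
  imports "HOL-Probability.Probability" "HOL-Library.Landau_Symbols"
begin

definition emp_cdf :: "(nat \<Rightarrow> real) \<Rightarrow> nat \<Rightarrow> real \<Rightarrow> real" where
  "emp_cdf Y n y = (\<Sum>i=1..n. if Y i \<le> y then 1 else 0) / real n"

definition emp_quantile :: "(nat \<Rightarrow> real) \<Rightarrow> nat \<Rightarrow> real \<Rightarrow> real" where
  "emp_quantile Y n p = Inf {y. emp_cdf Y n y \<ge> p}"

definition g_hat :: "(nat \<Rightarrow> real) \<Rightarrow> (real \<Rightarrow> real) \<Rightarrow> nat \<Rightarrow> real \<Rightarrow> real" where
  "g_hat Y FZ n x = emp_quantile Y n (FZ x)"

end

theory Submission
  imports Defs
begin

lemma garsia:
  fixes P :: "'a measure" and T :: "'a \<Rightarrow> 'a" and f :: "'a \<Rightarrow> real"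
  assumes P: "prob_space P" and T[measurable]: "T \<in> measurable P P" and inv: "distr P P T = P"
    and f[measurable]: "f \<in> borel_measurable P" and B: "\<And>x. x \<in> space P \<Longrightarrow> \<bar>f x\<bar> \<le> B"
  shows "0 \<le> integral\<^sup>L P (\<lambda>x. f x * indicator {x\<in>space P. \<exists>n\<in>{1..N}. (\<Sum>k<n. f ((T^^k) x)) > 0} x)"
proof -
  interpret prob_space P by (rule P)
  have B0: "0 \<le> B"
  proof -
    obtain x where "x \<in> space P" using not_empty by blast
    then show ?thesis using B[of x] by linarith
  qed
  define S where "S n x = (\<Sum>k<n. f ((T^^k) x))" for n x
  define Mx where "Mx x = Max ((\<lambda>n. S n x) ` {..N})" for x
  define A where "A = {x\<in>space P. \<exists>n\<in>{1..N}. S n x > 0}"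
  have Tk[measurable]: "(T^^k) \<in> measurable P P" for k
    by (induction k) (auto intro: measurable_comp[OF _ T])
  have S_meas[measurable]: "S n \<in> borel_measurable P" for n
    unfolding S_def by measurable
  have Mx_meas[measurable]: "Mx \<in> borel_measurable P"
    unfolding Mx_def by measurable
  have A_sets[measurable]: "A \<in> sets P"
    unfolding A_def by measurable
  have Tk_space: "(T^^k) x \<in> space P" if "x \<in> space P" for k x
    using measurable_space[OF Tk that] .
  have S_bound: "\<bar>S n x\<bar> \<le> real n * B" if "x \<in> space P" for n x
  proof -
    have "\<bar>S n x\<bar> \<le> (\<Sum>k<n. \<bar>f ((T^^k) x)\<bar>)" unfolding S_def by (rule sum_abs)
    also have "\<dots> \<le> (\<Sum>k<n. B)" by (intro sum_mono B Tk_space that)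
    finally show ?thesis by simp
  qed
  have Mx_ge: "S n x \<le> Mx x" if "n \<le> N" for n x
    unfolding Mx_def by (rule Max_ge) (use that in auto)
  have Mx_nonneg: "0 \<le> Mx x" for x
    using Mx_ge[of 0 x] by (simp add: S_def)
  have Mx_in: "\<exists>n\<le>N. Mx x = S n x" for x
  proof -
    have "Mx x \<in> (\<lambda>n. S n x) ` {..N}" unfolding Mx_def by (rule Max_in) auto
    then show ?thesis by auto
  qed
  have Mx_bound: "\<bar>Mx x\<bar> \<le> real N * \<bar>B\<bar>" if "x \<in> space P" for x
  proof -
    obtain n where n: "n \<le> N" "Mx x = S n x" using Mx_in by blast
    have "\<bar>S n x\<bar> \<le> real n * B" by (rule S_bound[OF that])
    also have "\<dots> \<le> real n * \<bar>B\<bar>" by (simp add: mult_left_mono)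
    also have "\<dots> \<le> real N * \<bar>B\<bar>" using n(1) by (simp add: mult_right_mono)
    finally show ?thesis using n by simp
  qed
  have S_Suc: "S (Suc n) x = f x + S n (T x)" for n x
    unfolding S_def by (subst sum.lessThan_Suc_shift) (simp add: funpow_Suc_right del: funpow.simps)
  have key: "Mx x \<le> f x + Mx (T x)" if "x \<in> A" for x
  proof -
    obtain n where n: "n \<le> N" "Mx x = S n x" using Mx_in by blast
    from that obtain n0 where "n0 \<in> {1..N}" "S n0 x > 0" unfolding A_def by auto
    then have "Mx x > 0" using Mx_ge[of n0 x] by auto
    have "n \<noteq> 0"
    proof
      assume "n = 0" then show False using n \<open>Mx x > 0\<close> by (simp add: S_def)
    qed
    then obtain n' where n': "n = Suc n'" by (cases n) auto
    have "Mx x = f x + S n' (T x)" using n n' S_Suc by simp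
    also have "S n' (T x) \<le> Mx (T x)" using Mx_ge n n' by simp
    finally show ?thesis by simp
  qed
  have zero_out: "Mx x = 0" if "x \<in> space P" "x \<notin> A" for x
  proof -
    obtain n where n: "n \<le> N" "Mx x = S n x" using Mx_in by blast
    have "\<not> S n x > 0" if "n \<ge> 1" using \<open>x \<notin> A\<close> \<open>x \<in> space P\<close> n that unfolding A_def by auto
    then show ?thesis using n Mx_nonneg[of x] by (cases n) (auto simp: S_def)
  qed
  have int_Mx: "integrable P Mx"
    by (rule integrable_const_bound[where B="real N * \<bar>B\<bar>"]) (auto intro!: Mx_bound)
  have int_MxT: "integrable P (\<lambda>x. Mx (T x))"
    by (rule integrable_const_bound[where B="real N * \<bar>B\<bar>"]) (auto intro!: Mx_bound measurable_space[OF T])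
  have int_f: "integrable P f"
    by (rule integrable_const_bound[where B=B]) (auto intro!: B)
  have int_fA: "integrable P (\<lambda>x. f x * indicator A x)"
    by (rule integrable_const_bound[where B=B]) (auto intro!: B B0 simp: indicator_def abs_mult)
  have int_MxTA: "integrable P (\<lambda>x. Mx (T x) * indicator A x)"
    by (rule integrable_const_bound[where B="real N * \<bar>B\<bar>"]) (auto intro!: Mx_bound measurable_space[OF T] simp: indicator_def)
  have "integral\<^sup>L P Mx = integral\<^sup>L P (\<lambda>x. Mx x * indicator A x)"
    by (rule Bochner_Integration.integral_cong) (auto simp: indicator_def zero_out)
  also have "\<dots> \<le> integral\<^sup>L P (\<lambda>x. f x * indicator A x + Mx (T x) * indicator A x)"
  proof (rule Bochner_Integration.integral_mono[OF _ Bochner_Integration.integrable_add[OF int_fA int_MxTA]])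
    show "integrable P (\<lambda>x. Mx x * indicator A x)"
      by (rule integrable_const_bound[where B="real N * \<bar>B\<bar>"]) (auto intro!: Mx_bound simp: indicator_def)
  qed (auto simp: indicator_def key)
  also have "\<dots> = integral\<^sup>L P (\<lambda>x. f x * indicator A x) + integral\<^sup>L P (\<lambda>x. Mx (T x) * indicator A x)"
    by (rule Bochner_Integration.integral_add[OF int_fA int_MxTA])
  also have "integral\<^sup>L P (\<lambda>x. Mx (T x) * indicator A x) \<le> integral\<^sup>L P (\<lambda>x. Mx (T x))"
    by (rule Bochner_Integration.integral_mono[OF int_MxTA int_MxT]) (auto simp: indicator_def Mx_nonneg)
  also have "integral\<^sup>L P (\<lambda>x. Mx (T x)) = integral\<^sup>L P Mx"
  proof -
    have "integral\<^sup>L P (\<lambda>x. Mx (T x)) = integral\<^sup>L (distr P P T) Mx"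
      by (rule integral_distr[symmetric]) auto
    then show ?thesis using inv by simp
  qed
  finally have "0 \<le> integral\<^sup>L P (\<lambda>x. f x * indicator A x)" by simp
  then show ?thesis unfolding A_def S_def .
qed

lemma hopf:
  fixes P :: "'a measure" and T :: "'a \<Rightarrow> 'a" and g :: "'a \<Rightarrow> real"
  assumes P: "prob_space P" and T[measurable]: "T \<in> measurable P P" and inv: "distr P P T = P"
    and g[measurable]: "g \<in> borel_measurable P" and g01: "\<And>x. x \<in> space P \<Longrightarrow> 0 \<le> g x \<and> g x \<le> 1"
    and l: "l > 0"
  shows "measure P {x\<in>space P. \<exists>n\<ge>1. (\<Sum>k<n. g ((T^^k) x)) > real n * l} \<le> integral\<^sup>L P g / l"
proof -
  interpret prob_space P by (rule P)
  have Tk[measurable]: "(T^^k) \<in> measurable P P" for k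
    by (induction k) (auto intro: measurable_comp[OF _ T])
  define A where "A N = {x\<in>space P. \<exists>n\<in>{1..N}. (\<Sum>k<n. g ((T^^k) x) - l) > 0}" for N
  have A_sets[measurable]: "A N \<in> sets P" for N unfolding A_def by measurable
  have g_abs: "\<bar>g x\<bar> \<le> 1" if "x \<in> space P" for x using g01[OF that] by auto
  have int_g: "integrable P g"
    by (rule integrable_const_bound[where B=1]) (auto intro!: AE_I2 g_abs)
  have bnd: "l * measure P (A N) \<le> integral\<^sup>L P g" for N
  proof -
    have gl: "\<bar>g x - l\<bar> \<le> 1 + l" if "x \<in> space P" for x using g01[OF that] l by auto
    have "0 \<le> integral\<^sup>L P (\<lambda>x. (g x - l) * indicator (A N) x)"
      unfolding A_def by (rule garsia[OF P T inv, where f="\<lambda>x. g x - l" and B="1+l" and N=N]) (auto intro: gl)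
    also have "\<dots> = integral\<^sup>L P (\<lambda>x. g x * indicator (A N) x) - l * measure P (A N)"
    proof -
      have i1: "integrable P (\<lambda>x. g x * indicator (A N) x)"
        by (rule integrable_const_bound[where B=1]) (auto intro!: AE_I2 g_abs simp: indicator_def)
      have "integral\<^sup>L P (\<lambda>x. (g x - l) * indicator (A N) x) =
            integral\<^sup>L P (\<lambda>x. g x * indicator (A N) x - l * indicator (A N) x)"
        by (simp add: algebra_simps)
      also have "\<dots> = integral\<^sup>L P (\<lambda>x. g x * indicator (A N) x) - integral\<^sup>L P (\<lambda>x. l * indicator (A N) x)"
      proof (rule Bochner_Integration.integral_diff[OF i1])
        have "integrable P (indicator (A N) :: _ \<Rightarrow> real)"
          by (rule integrable_const_bound[where B=1]) (auto simp: indicator_def)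
        then show "integrable P (\<lambda>x. l * indicator (A N) x)" by simp
      qed
      finally show ?thesis by simp
    qed
    also have "integral\<^sup>L P (\<lambda>x. g x * indicator (A N) x) \<le> integral\<^sup>L P g"
      by (rule Bochner_Integration.integral_mono[OF _ int_g])
         (auto dest: g01 simp: indicator_def intro!: AE_I2 g_abs integrable_const_bound[where B=1])
    finally show ?thesis by simp
  qed
  have inc: "incseq A"
    unfolding incseq_def A_def by (auto 0 3 intro: bexI)
  have lim: "(\<lambda>N. measure P (A N)) \<longlonglongrightarrow> measure P (\<Union>N. A N)"
    by (rule finite_Lim_measure_incseq) (auto simp: inc)
  have "measure P (\<Union>N. A N) \<le> integral\<^sup>L P g / l"
    by (rule LIMSEQ_le_const2[OF lim]) (use bnd l in \<open>auto simp: field_simps mult.commute\<close>)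
  moreover have "{x\<in>space P. \<exists>n\<ge>1. (\<Sum>k<n. g ((T^^k) x)) > real n * l} = (\<Union>N. A N)"
    unfolding A_def by (auto simp: sum_subtractf) (meson atLeastAtMost_iff order_refl)
  ultimately show ?thesis by simp
qed


definition shiftS :: "(int \<Rightarrow> real) \<Rightarrow> (int \<Rightarrow> real)" where
  "shiftS e = (\<lambda>j. e (j + 1))"

lemma funpow_shiftS: "(shiftS ^^ s) e = (\<lambda>j. e (j + int s))"
  by (induction s arbitrary: e) (auto simp: shiftS_def algebra_simps)

lemma shiftS_meas[measurable]:
  "shiftS \<in> measurable (PiM (UNIV::int set) (\<lambda>_. borel :: real measure)) (PiM UNIV (\<lambda>_. borel))"
  unfolding shiftS_def by (rule measurable_PiM_single') (auto simp: space_PiM)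

lemma funpow_shiftS_meas[measurable]:
  "(shiftS ^^ s) \<in> measurable (PiM (UNIV::int set) (\<lambda>_. borel :: real measure)) (PiM UNIV (\<lambda>_. borel))"
  by (induction s) (auto intro: measurable_comp[OF _ shiftS_meas])

locale lproc =
  fixes M :: "'w measure" and eps :: "int \<Rightarrow> 'w \<Rightarrow> real" and D :: "real measure"
  assumes M: "prob_space M"
    and indep: "prob_space.indep_vars M (\<lambda>_. borel) eps UNIV"
    and distr_eps: "\<And>i. distr M borel (eps i) = D"
begin

sublocale prob_space M by (rule M)

lemma eps_meas[measurable]: "eps i \<in> borel_measurable M"
  using indep unfolding indep_vars_def by auto

definition Ev :: "'w \<Rightarrow> int \<Rightarrow> real" where "Ev \<omega> = (\<lambda>j. eps j \<omega>)"

abbreviation Sq :: "(int \<Rightarrow> real) measure" where "Sq \<equiv> PiM UNIV (\<lambda>_. borel)"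

lemma Ev_meas[measurable]: "Ev \<in> measurable M Sq"
  unfolding Ev_def by (rule measurable_PiM_single') (auto simp: space_PiM)

lemma shifted_meas[measurable]: "(\<lambda>\<omega> j. eps (j + c) \<omega>) \<in> measurable M Sq"
  by (rule measurable_PiM_single') (auto simp: space_PiM)

lemma Ev_funpow_meas[measurable]: "(\<lambda>\<omega>. (shiftS ^^ s) (Ev \<omega>)) \<in> measurable M Sq"
  using measurable_comp[OF Ev_meas funpow_shiftS_meas] by (simp add: comp_def)

definition "Pinf = distr M Sq Ev"

lemma prob_block:
  assumes J: "finite J" and A: "\<And>j. j \<in> J \<Longrightarrow> A j \<in> sets borel"
  shows "prob {\<omega>\<in>space M. \<forall>j\<in>J. eps (j + c) \<omega> \<in> A j} = (\<Prod>j\<in>J. measure D (A j))"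
proof (cases "J = {}")
  case True then show ?thesis by (simp add: prob_space)
next
  case False
  let ?K = "(\<lambda>j. j + c) ` J"
  have inj: "inj_on (\<lambda>j. j + c) J" by (auto simp: inj_on_def)
  have eq: "{\<omega>\<in>space M. \<forall>j\<in>J. eps (j + c) \<omega> \<in> A j} = (\<Inter>i\<in>?K. eps i -` A (i - c) \<inter> space M)"
    using False by auto
  have "prob (\<Inter>i\<in>?K. eps i -` A (i - c) \<inter> space M) = (\<Prod>i\<in>?K. prob (eps i -` A (i - c) \<inter> space M))"
    by (rule indep_varsD[OF indep]) (use False J A in auto)
  also have "\<dots> = (\<Prod>j\<in>J. prob (eps (j + c) -` A j \<inter> space M))"
    by (subst prod.reindex[OF inj]) simp
  also have "\<dots> = (\<Prod>j\<in>J. measure D (A j))"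
  proof (rule prod.cong[OF refl])
    fix j assume "j \<in> J"
    have "measure D (A j) = measure (distr M borel (eps (j + c))) (A j)" by (simp add: distr_eps)
    also have "\<dots> = prob (eps (j + c) -` A j \<inter> space M)"
      by (rule measure_distr) (use A \<open>j \<in> J\<close> in auto)
    finally show "prob (eps (j + c) -` A j \<inter> space M) = measure D (A j)" by simp
  qed
  finally show ?thesis using eq by simp
qed

lemma distr_shift_gen:
  "distr M Sq (\<lambda>\<omega> j. eps (j + c) \<omega>) = distr M Sq Ev"
proof (rule measure_eqI_PiM_infinite)
  show "sets (distr M Sq (\<lambda>\<omega> j. eps (j + c) \<omega>)) = sets Sq" by simp
  show "sets (distr M Sq Ev) = sets Sq" by simp
  show "finite_measure (distr M Sq (\<lambda>\<omega> j. eps (j + c) \<omega>))"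
    by (intro prob_space.finite_measure prob_space_distr) (rule measurable_PiM_single', auto simp: space_PiM)
  fix A :: "int \<Rightarrow> real set" and J :: "int set" assume J: "finite J" "J \<subseteq> UNIV" and A: "\<And>i. i \<in> J \<Longrightarrow> A i \<in> sets borel"
  have X: "prod_emb UNIV (\<lambda>_. borel) J (Pi\<^sub>E J A) \<in> sets Sq"
    using J A by (intro sets_PiM_I) auto
  have "emeasure (distr M Sq (\<lambda>\<omega> j. eps (j + c) \<omega>)) (prod_emb UNIV (\<lambda>_. borel) J (Pi\<^sub>E J A))
     = emeasure M {\<omega>\<in>space M. \<forall>j\<in>J. eps (j + c) \<omega> \<in> A j}"
    using X by (subst emeasure_distr) (auto simp: prod_emb_iff intro!: arg_cong[where f="emeasure M"])
  also have "\<dots> = ennreal (\<Prod>j\<in>J. measure D (A j))"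
    using prob_block[OF J(1) A, where c=c] by (simp add: emeasure_eq_measure)
  also have "\<dots> = emeasure M {\<omega>\<in>space M. \<forall>j\<in>J. eps (j + 0) \<omega> \<in> A j}"
    using prob_block[OF J(1) A, where c=0] by (simp add: emeasure_eq_measure)
  also have "\<dots> = emeasure (distr M Sq Ev) (prod_emb UNIV (\<lambda>_. borel) J (Pi\<^sub>E J A))"
    using X by (subst emeasure_distr) (auto simp: prod_emb_iff Ev_def intro!: arg_cong[where f="emeasure M"])
  finally show "emeasure (distr M Sq (\<lambda>\<omega> j. eps (j + c) \<omega>)) (prod_emb UNIV (\<lambda>_. borel) J (Pi\<^sub>E J A)) =
        emeasure (distr M Sq Ev) (prod_emb UNIV (\<lambda>_. borel) J (Pi\<^sub>E J A))" .
qed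

lemma Pinf_prob: "prob_space Pinf"
  unfolding Pinf_def by (rule prob_space_distr) measurable

lemma sets_Pinf[simp, measurable_cong]: "sets Pinf = sets Sq"
  by (simp add: Pinf_def)

lemma space_Pinf[simp]: "space Pinf = space Sq"
  by (simp add: Pinf_def)

lemma shift_meas_Pinf[measurable]: "shiftS \<in> measurable Pinf Pinf"
  by (simp add: measurable_cong_sets[OF sets_Pinf sets_Pinf])

lemma Pinf_shift_inv: "distr Pinf Pinf shiftS = Pinf"
proof -
  have "distr Pinf Pinf shiftS = distr Pinf Sq shiftS"
    by (rule distr_cong) auto
  also have "\<dots> = distr M Sq (\<lambda>\<omega>. shiftS (Ev \<omega>))"
    unfolding Pinf_def by (subst distr_distr) (auto simp: comp_def)
  also have "(\<lambda>\<omega>. shiftS (Ev \<omega>)) = (\<lambda>\<omega> j. eps (j + 1) \<omega>)"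
    by (auto simp: shiftS_def Ev_def)
  also have "distr M Sq \<dots> = Pinf" unfolding Pinf_def by (rule distr_shift_gen)
  finally show ?thesis .
qed

lemma Pinf_funpow_inv: "distr Pinf Sq (shiftS ^^ s) = Pinf"
proof -
  have "distr M Sq (\<lambda>\<omega>. (shiftS ^^ s) (Ev \<omega>)) = distr M Sq (\<lambda>\<omega> j. eps (j + int s) \<omega>)"
    by (simp add: funpow_shiftS Ev_def)
  also have "\<dots> = Pinf" unfolding Pinf_def by (rule distr_shift_gen)
  finally have *: "distr M Sq (\<lambda>\<omega>. (shiftS ^^ s) (Ev \<omega>)) = Pinf" .
  have m: "(shiftS ^^ s) \<in> measurable Sq Sq"
    by (induction s) (auto intro: measurable_comp[OF _ shiftS_meas])
  have "distr Pinf Sq (shiftS ^^ s) = distr M Sq (\<lambda>\<omega>. (shiftS ^^ s) (Ev \<omega>))"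
    unfolding Pinf_def by (subst distr_distr) (auto simp: comp_def m)
  with * show ?thesis by simp
qed

lemma distr_stat:
  fixes H :: "(int \<Rightarrow> real) \<Rightarrow> real"
  assumes H[measurable]: "H \<in> borel_measurable Sq"
  shows "distr M borel (\<lambda>\<omega>. H ((shiftS ^^ s) (Ev \<omega>))) = distr M borel (\<lambda>\<omega>. H (Ev \<omega>))"
proof -
  have m: "(shiftS ^^ s) \<in> measurable Sq Sq"
    by (induction s) (auto intro: measurable_comp[OF _ shiftS_meas])
  have "distr M borel (\<lambda>\<omega>. H ((shiftS ^^ s) (Ev \<omega>))) = distr (distr M Sq (\<lambda>\<omega>. (shiftS ^^ s) (Ev \<omega>))) borel H"
    by (subst distr_distr) (auto simp: comp_def m)
  also have "distr M Sq (\<lambda>\<omega>. (shiftS ^^ s) (Ev \<omega>)) = distr Pinf Sq (shiftS ^^ s)"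
    unfolding Pinf_def by (subst distr_distr) (auto simp: comp_def m)
  also have "\<dots> = distr M Sq Ev" using Pinf_funpow_inv[of s] unfolding Pinf_def by simp
  also have "distr (distr M Sq Ev) borel H = distr M borel (\<lambda>\<omega>. H (Ev \<omega>))"
    by (subst distr_distr) (auto simp: comp_def)
  finally show ?thesis .
qed

lemma distr_shifted_Ev: "distr M Sq (\<lambda>\<omega>. (shiftS ^^ s) (Ev \<omega>)) = Pinf"
proof -
  have "distr M Sq (\<lambda>\<omega>. (shiftS ^^ s) (Ev \<omega>)) = distr M Sq (\<lambda>\<omega> j. eps (j + int s) \<omega>)"
    by (simp add: funpow_shiftS Ev_def)
  also have "\<dots> = Pinf" unfolding Pinf_def by (rule distr_shift_gen)
  finally show ?thesis .
qed

lemma integral_stat: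
  fixes H :: "(int \<Rightarrow> real) \<Rightarrow> real"
  assumes H[measurable]: "H \<in> borel_measurable Sq"
  shows "expectation (\<lambda>\<omega>. H ((shiftS ^^ s) (Ev \<omega>))) = expectation (\<lambda>\<omega>. H (Ev \<omega>))"
proof -
  have 1: "integral\<^sup>L Pinf H = expectation (\<lambda>\<omega>. H ((shiftS ^^ s) (Ev \<omega>)))"
    using Bochner_Integration.integral_distr[of "\<lambda>\<omega>. (shiftS ^^ s) (Ev \<omega>)" M Sq H]
    by (simp add: distr_shifted_Ev)
  have 2: "integral\<^sup>L Pinf H = expectation (\<lambda>\<omega>. H (Ev \<omega>))"
    using Bochner_Integration.integral_distr[of Ev M Sq H] by (simp add: Pinf_def)
  show ?thesis using 1 2 by simp
qed

end

definition zt :: "(nat \<Rightarrow> real) \<Rightarrow> nat \<Rightarrow> int \<Rightarrow> (int \<Rightarrow> real) \<Rightarrow> real" where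
  "zt a m k e = (\<Sum>i<m. a i * e (k - int i))"

definition zf :: "(nat \<Rightarrow> real) \<Rightarrow> int \<Rightarrow> (int \<Rightarrow> real) \<Rightarrow> real" where
  "zf a k e = (\<Sum>i. a i * e (k - int i))"

lemma zt_shift: "zt a m k ((shiftS ^^ s) e) = zt a m (k + int s) e"
  by (simp add: zt_def funpow_shiftS algebra_simps)

lemma zf_shift: "zf a k ((shiftS ^^ s) e) = zf a (k + int s) e"
  by (simp add: zf_def funpow_shiftS algebra_simps)

lemma zt_meas[measurable]: "zt a m k \<in> borel_measurable (PiM (UNIV::int set) (\<lambda>_. borel :: real measure))"
  unfolding zt_def by measurable

lemma zf_meas[measurable]: "zf a k \<in> borel_measurable (PiM (UNIV::int set) (\<lambda>_. borel :: real measure))"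
  unfolding zf_def by measurable

lemma mod_close:
  fixes k k' i i' m :: nat
  assumes "k mod m = k' mod m" "int k - int i = int k' - int i'" "i < m" "i' < m"
  shows "k = k'"
proof -
  have "int k mod int m = int k' mod int m" using assms(1) by (metis of_nat_mod)
  then have d: "int m dvd (int k - int k')" by (simp add: mod_eq_dvd_iff)
  have lt: "\<bar>int k - int k'\<bar> < int m" using assms(2-4) by linarith
  show ?thesis
  proof (rule ccontr)
    assume "k \<noteq> k'"
    then have "int k - int k' \<noteq> 0" by simp
    from dvd_imp_le_int[OF this d] lt show False by simp
  qed
qed

context lproc
begin

lemma mdep_indep:
  fixes \<phi> :: "real \<Rightarrow> real" and a :: "nat \<Rightarrow> real"
  assumes phi[measurable]: "\<phi> \<in> borel_measurable borel"
    and K: "\<And>k k'. k \<in> K \<Longrightarrow> k' \<in> K \<Longrightarrow> k mod m = k' mod m"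
  shows "indep_vars (\<lambda>_. borel) (\<lambda>k \<omega>. \<phi> (zt a m (int k) (Ev \<omega>))) K"
proof -
  define B where "B k = {int k - int i | i. i < m}" for k :: nat
  have disj: "disjoint_family_on B K"
    unfolding disjoint_family_on_def B_def using K mod_close by blast
  have ind: "indep_vars (\<lambda>k. PiM (B k) (\<lambda>_. borel)) (\<lambda>k \<omega>. restrict (\<lambda>i. eps i \<omega>) (B k)) K"
    by (rule indep_vars_restrict[OF indep]) (use disj in auto)
  define Y where "Y k x = \<phi> (\<Sum>i<m. a i * x (int k - int i))" for k :: nat and x :: "int \<Rightarrow> real"
  have Ym: "Y k \<in> measurable (PiM (B k) (\<lambda>_. borel)) borel" for k
    unfolding Y_def
    by (intro measurable_compose[OF _ phi] borel_measurable_sum borel_measurable_times borel_measurable_const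
          measurable_component_singleton) (auto simp: B_def)
  have "indep_vars (\<lambda>_. borel) (\<lambda>k \<omega>. Y k (restrict (\<lambda>i. eps i \<omega>) (B k))) K"
    by (rule indep_vars_compose2[OF ind]) (rule Ym)
  also have "?this \<longleftrightarrow> ?thesis"
    by (intro indep_vars_cong) (auto simp: Y_def zt_def Ev_def B_def fun_eq_iff intro!: arg_cong[where f=\<phi>] sum.cong)
  finally show ?thesis .
qed

lemma mdep_distr:
  fixes \<phi> :: "real \<Rightarrow> real" and a :: "nat \<Rightarrow> real"
  assumes phi[measurable]: "\<phi> \<in> borel_measurable borel" and k: "k \<ge> 1"
  shows "distr M borel (\<lambda>\<omega>. \<phi> (zt a m (int k) (Ev \<omega>))) = distr M borel (\<lambda>\<omega>. \<phi> (zt a m 1 (Ev \<omega>)))"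
proof -
  have "distr M borel (\<lambda>\<omega>. \<phi> (zt a m 1 ((shiftS ^^ (k - 1)) (Ev \<omega>)))) = distr M borel (\<lambda>\<omega>. \<phi> (zt a m 1 (Ev \<omega>)))"
    by (rule distr_stat) measurable
  moreover have "zt a m 1 ((shiftS ^^ (k - 1)) e) = zt a m (int k) e" for e
    using k by (simp add: zt_shift of_nat_diff)
  ultimately show ?thesis by simp
qed

lemma mdep_hoeffding:
  fixes \<phi> :: "real \<Rightarrow> real" and a :: "nat \<Rightarrow> real"
  assumes phi[measurable]: "\<phi> \<in> borel_measurable borel" and phi01: "\<And>t. 0 \<le> \<phi> t \<and> \<phi> t \<le> 1"
    and K: "\<And>k k'. k \<in> K \<Longrightarrow> k' \<in> K \<Longrightarrow> k mod m = k' mod m"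
    and K1: "\<And>k. k \<in> K \<Longrightarrow> k \<ge> 1" and fin: "finite K" and ne: "K \<noteq> {}" and e: "e \<ge> 0"
  shows "prob {\<omega>\<in>space M. \<bar>(\<Sum>k\<in>K. \<phi> (zt a m (int k) (Ev \<omega>))) - real (card K) * expectation (\<lambda>\<omega>. \<phi> (zt a m 1 (Ev \<omega>)))\<bar> \<ge> e}
     \<le> 2 * exp (-2 * e\<^sup>2 / real (card K))"
proof -
  define X where "X k \<omega> = \<phi> (zt a m (int k) (Ev \<omega>))" for k :: nat and \<omega>
  interpret H: Hoeffding_ineq_iid M K X "X 1" 0 1 "expectation (X 1)"
  proof unfold_locales
    show "finite K" by fact
    show "indep_vars (\<lambda>_. borel) X K" unfolding X_def by (rule mdep_indep[OF phi K])
    show "distr M borel (X i) = distr M borel (X 1)" if "i \<in> K" for i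
      unfolding X_def using mdep_distr[OF phi K1[OF that]] by simp
    show "random_variable borel (X 1)" unfolding X_def by measurable
    show "AE x in M. X 1 x \<in> {0..1}" using phi01 by (auto simp: X_def)
  qed (rule reflexive)
  have "prob {\<omega>\<in>space M. \<bar>(\<Sum>k\<in>K. X k \<omega>) - real (card K) * expectation (X 1)\<bar> \<ge> e}
     \<le> 2 * exp (-2 * e\<^sup>2 / (real (card K) * (1 - 0)\<^sup>2))"
    using H.Hoeffding_ineq_abs_ge[OF e _ ne] by simp
  then show ?thesis unfolding X_def by simp
qed

lemma mdep_slln:
  fixes \<phi> :: "real \<Rightarrow> real" and a :: "nat \<Rightarrow> real"
  assumes phi[measurable]: "\<phi> \<in> borel_measurable borel" and phi01: "\<And>t. 0 \<le> \<phi> t \<and> \<phi> t \<le> 1"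
    and m: "m \<ge> 1" and t: "t > 0"
    and mu: "\<mu> = expectation (\<lambda>\<omega>. \<phi> (zt a m 1 (Ev \<omega>)))"
  shows "AE \<omega> in M. eventually (\<lambda>n. \<bar>(\<Sum>k\<in>{1..n}. \<phi> (zt a m (int k) (Ev \<omega>))) - real n * \<mu>\<bar> < real n * t) sequentially"
proof -
  define X where "X k \<omega> = \<phi> (zt a m (int k) (Ev \<omega>))" for k :: nat and \<omega>
  have Xm[measurable]: "X k \<in> borel_measurable M" for k unfolding X_def by measurable
  define A where "A n = {\<omega>\<in>space M. real n * t \<le> \<bar>(\<Sum>k\<in>{1..n}. X k \<omega>) - real n * \<mu>\<bar>}" for n
  define K where "K n r = {k. k \<in> {1..n} \<and> k mod m = r}" for n r :: nat
  define E where "E n r = {\<omega>\<in>space M. real n * t / real m \<le> \<bar>(\<Sum>k\<in>K n r. X k \<omega>) - real (card (K n r)) * \<mu>\<bar>}" for n r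
  have A_sets[measurable]: "A n \<in> sets M" for n unfolding A_def by measurable
  have E_sets[measurable]: "E n r \<in> sets M" for n r unfolding E_def by measurable
  define q where "q = exp (-2 * t\<^sup>2 / (real m)\<^sup>2)"
  have q: "0 \<le> q" "q < 1" using t m by (auto simp: q_def)
  have finK: "finite (K n r)" for n r unfolding K_def by auto
  have cardK: "card (K n r) \<le> n" for n r
  proof -
    have "card (K n r) \<le> card {1..n}" by (rule card_mono) (auto simp: K_def)
    then show ?thesis by simp
  qed
  have Ebound: "prob (E n r) \<le> 2 * q ^ n" if n: "n \<ge> 1" for n r
  proof (cases "K n r = {}")
    case True
    have "E n r = {}" using True t m n unfolding E_def by (auto simp: not_le intro!: divide_pos_pos)
    then show ?thesis using q by simp
  next
    case False
    have c0: "card (K n r) > 0" using False finK by (simp add: card_gt_0_iff)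
    have "prob (E n r) \<le> 2 * exp (-2 * (real n * t / real m)\<^sup>2 / real (card (K n r)))"
      unfolding E_def X_def mu
      by (rule mdep_hoeffding[OF phi phi01 _ _ finK False]) (use t m in \<open>auto simp: K_def\<close>)
    also have "\<dots> \<le> 2 * exp (real n * (-2 * t\<^sup>2 / (real m)\<^sup>2))"
    proof -
      have "real n * (2 * t\<^sup>2 / (real m)\<^sup>2) \<le> 2 * (real n * t / real m)\<^sup>2 / real (card (K n r))"
      proof -
        have "real (card (K n r)) \<le> real n" using cardK by simp
        then have "real n * (2 * t\<^sup>2 / (real m)\<^sup>2) * real (card (K n r)) \<le> real n * (2 * t\<^sup>2 / (real m)\<^sup>2) * real n"
          by (intro mult_left_mono) auto
        also have "\<dots> = 2 * (real n * t / real m)\<^sup>2" using m by (simp add: power2_eq_square field_simps)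
        finally have *: "real n * (2 * t\<^sup>2 / (real m)\<^sup>2) * real (card (K n r)) \<le> 2 * (real n * t / real m)\<^sup>2" .
        have cpos: "real (card (K n r)) > 0" using c0 by simp
        show ?thesis using * by (subst pos_le_divide_eq[OF cpos])
      qed
      then show ?thesis by simp
    qed
    also have "\<dots> = 2 * q ^ n" unfolding q_def by (subst exp_of_nat_mult[symmetric]) simp
    finally show ?thesis .
  qed
  have sumX: "(\<Sum>k\<in>{1..n}. X k \<omega>) = (\<Sum>r<m. \<Sum>k\<in>K n r. X k \<omega>)" for n \<omega>
    unfolding K_def using m by (subst sum.group[symmetric, of "{1..n}" "{..<m}" "\<lambda>k. k mod m"]) auto
  have sumN: "real n = (\<Sum>r<m. real (card (K n r)))" for n
  proof -
    have "(\<Sum>k\<in>{1..n}. (1::real)) = (\<Sum>r<m. \<Sum>k\<in>K n r. 1)"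
      unfolding K_def using m by (subst sum.group[symmetric, of "{1..n}" "{..<m}" "\<lambda>k. k mod m"]) auto
    then show ?thesis by simp
  qed
  have Asub: "A n \<subseteq> (\<Union>r\<in>{..<m}. E n r)" if n: "n \<ge> 1" for n
  proof
    fix \<omega> assume w: "\<omega> \<in> A n"
    show "\<omega> \<in> (\<Union>r\<in>{..<m}. E n r)"
    proof (rule ccontr)
      assume "\<omega> \<notin> (\<Union>r\<in>{..<m}. E n r)"
      then have lt: "\<bar>(\<Sum>k\<in>K n r. X k \<omega>) - real (card (K n r)) * \<mu>\<bar> < real n * t / real m" if "r < m" for r
        using w that unfolding E_def A_def by (auto simp: not_le)
      have "(\<Sum>k\<in>{1..n}. X k \<omega>) - real n * \<mu> = (\<Sum>r<m. \<Sum>k\<in>K n r. X k \<omega>) - (\<Sum>r<m. real (card (K n r))) * \<mu>"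
        by (subst sumX, subst sumN[of n]) (rule refl)
      also have "\<dots> = (\<Sum>r<m. (\<Sum>k\<in>K n r. X k \<omega>) - real (card (K n r)) * \<mu>)"
        by (simp only: sum_subtractf sum_distrib_right)
      finally have eqd: "(\<Sum>k\<in>{1..n}. X k \<omega>) - real n * \<mu> = (\<Sum>r<m. (\<Sum>k\<in>K n r. X k \<omega>) - real (card (K n r)) * \<mu>)" .
      have "\<bar>(\<Sum>k\<in>{1..n}. X k \<omega>) - real n * \<mu>\<bar> \<le> (\<Sum>r<m. \<bar>(\<Sum>k\<in>K n r. X k \<omega>) - real (card (K n r)) * \<mu>\<bar>)"
        unfolding eqd by (rule sum_abs)
      also have "\<dots> < (\<Sum>r<m. real n * t / real m)"
        by (rule sum_strict_mono) (use m lt in \<open>auto simp: lessThan_empty_iff\<close>)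
      also have "\<dots> = real n * t" using m by simp
      finally show False using w unfolding A_def by auto
    qed
  qed
  have Abound: "prob (A n) \<le> real m * (2 * q ^ n)" if n: "n \<ge> 1" for n
  proof -
    have "prob (A n) \<le> prob (\<Union>r\<in>{..<m}. E n r)"
      by (rule finite_measure_mono[OF Asub[OF n]]) auto
    also have "\<dots> \<le> (\<Sum>r<m. prob (E n r))"
      by (rule finite_measure_subadditive_finite) auto
    also have "\<dots> \<le> (\<Sum>r<m. 2 * q ^ n)"
      by (rule sum_mono) (rule Ebound[OF n])
    finally show ?thesis by simp
  qed
  have summ: "summable (\<lambda>n. prob (A n))"
  proof (rule summable_comparison_test')
    show "summable (\<lambda>n. real m * (2 * q ^ n))"
      using q by (intro summable_mult summable_geometric) auto
    show "norm (prob (A n)) \<le> real m * (2 * q ^ n)" if "n \<ge> 1" for n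
      using Abound[OF that] by simp
  qed
  have "AE \<omega> in M. eventually (\<lambda>n. \<omega> \<in> space M - A n) sequentially"
    by (rule borel_cantelli_AE1) (auto simp: summ emeasure_eq_measure)
  then show ?thesis
    by (rule AE_mp) (auto intro!: AE_I2 elim!: eventually_mono simp: A_def X_def not_le)
qed

end

lemma ex_inv_Suc: "(r::real) > 0 \<Longrightarrow> \<exists>j. inverse (real (Suc j)) < r"
  by (metis ex_inverse_of_nat_less gr0_implies_Suc)


lemma lip_cont:
  fixes \<phi> :: "real \<Rightarrow> real"
  assumes d: "\<delta> > 0" and lip: "\<And>s t. \<bar>\<phi> s - \<phi> t\<bar> \<le> \<bar>s - t\<bar> / \<delta>"
  shows "continuous_on UNIV \<phi>"
  unfolding continuous_on_iff
proof (intro ballI allI impI)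
  fix x e :: real assume e: "e > 0"
  show "\<exists>d>0. \<forall>x'\<in>UNIV. dist x' x < d \<longrightarrow> dist (\<phi> x') (\<phi> x) < e"
  proof (intro exI[of _ "e * \<delta>"] conjI ballI impI)
    show "e * \<delta> > 0" using e d by simp
    fix x' assume "dist x' x < e * \<delta>"
    then have "\<bar>x' - x\<bar> / \<delta> < e" using d by (simp add: dist_real_def divide_less_eq)
    then show "dist (\<phi> x') (\<phi> x) < e" using lip[of x' x] by (simp add: dist_real_def)
  qed
qed

lemma conv_from_eps1:
  fixes x :: "nat \<Rightarrow> real"
  assumes "\<And>j. eventually (\<lambda>n. \<bar>x n - L\<bar> \<le> 1 / Suc j) sequentially"
  shows "x \<longlonglongrightarrow> L"
  unfolding tendsto_iff dist_real_def
proof (intro allI impI)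
  fix r :: real assume r: "r > 0"
  then obtain j where j: "inverse (real (Suc j)) < r" using ex_inv_Suc by blast
  have eq: "1 / real (Suc j) = inverse (real (Suc j))" by (simp add: inverse_eq_divide)
  show "eventually (\<lambda>n. \<bar>x n - L\<bar> < r) sequentially"
    using assms[of j] by (rule eventually_mono) (use j eq in linarith)
qed

lemma sum_shift1: "(\<Sum>k\<in>{1..n}. f k) = (\<Sum>k<n. f (Suc k) :: real)"
  by (induction n) auto

context lproc
begin

lemma hopf_M:
  fixes v :: "(int \<Rightarrow> real) \<Rightarrow> real"
  assumes v[measurable]: "v \<in> borel_measurable Sq" and v01: "\<And>e. 0 \<le> v e \<and> v e \<le> 1" and l: "l > 0"
  shows "prob {\<omega>\<in>space M. \<exists>n\<ge>1. (\<Sum>k<n. v ((shiftS ^^ k) (Ev \<omega>))) > real n * l}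
           \<le> expectation (\<lambda>\<omega>. v (Ev \<omega>)) / l"
proof -
  have vP[measurable]: "v \<in> borel_measurable Pinf" using v by simp
  have "measure Pinf {e\<in>space Pinf. \<exists>n\<ge>1. (\<Sum>k<n. v ((shiftS ^^ k) e)) > real n * l} \<le> integral\<^sup>L Pinf v / l"
    by (rule hopf[OF Pinf_prob shift_meas_Pinf Pinf_shift_inv vP _ l]) (use v01 in auto)
  moreover have "measure Pinf {e\<in>space Pinf. \<exists>n\<ge>1. (\<Sum>k<n. v ((shiftS ^^ k) e)) > real n * l}
     = prob {\<omega>\<in>space M. \<exists>n\<ge>1. (\<Sum>k<n. v ((shiftS ^^ k) (Ev \<omega>))) > real n * l}"
  proof -
    have S: "{e\<in>space Sq. \<exists>n\<ge>1. (\<Sum>k<n. v ((shiftS ^^ k) e)) > real n * l} \<in> sets Sq"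
      by measurable
    have "measure Pinf {e\<in>space Pinf. \<exists>n\<ge>1. (\<Sum>k<n. v ((shiftS ^^ k) e)) > real n * l}
        = prob (Ev -` {e\<in>space Sq. \<exists>n\<ge>1. (\<Sum>k<n. v ((shiftS ^^ k) e)) > real n * l} \<inter> space M)"
      unfolding Pinf_def using S by (subst measure_distr) auto
    also have "Ev -` {e\<in>space Sq. \<exists>n\<ge>1. (\<Sum>k<n. v ((shiftS ^^ k) e)) > real n * l} \<inter> space M
        = {\<omega>\<in>space M. \<exists>n\<ge>1. (\<Sum>k<n. v ((shiftS ^^ k) (Ev \<omega>))) > real n * l}"
      using measurable_space[OF Ev_meas] by auto
    finally show ?thesis .
  qed
  moreover have "integral\<^sup>L Pinf v = expectation (\<lambda>\<omega>. v (Ev \<omega>))"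
    unfolding Pinf_def by (rule Bochner_Integration.integral_distr) auto
  ultimately show ?thesis by simp
qed

lemma slln_lip:
  fixes \<phi> :: "real \<Rightarrow> real" and a :: "nat \<Rightarrow> real"
  assumes conv1: "AE \<omega> in M. summable (\<lambda>i. a i * eps (1 - int i) \<omega>)"
    and d: "\<delta> > 0" and phi01: "\<And>t. 0 \<le> \<phi> t \<and> \<phi> t \<le> 1"
    and lip: "\<And>s t. \<bar>\<phi> s - \<phi> t\<bar> \<le> \<bar>s - t\<bar> / \<delta>"
  shows "AE \<omega> in M. (\<lambda>n. (\<Sum>k\<in>{1..n}. \<phi> (zf a (int k) (Ev \<omega>))) / real n)
            \<longlonglongrightarrow> expectation (\<lambda>\<omega>. \<phi> (zf a 0 (Ev \<omega>)))"
proof -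
  have cont: "continuous_on UNIV \<phi>" by (rule lip_cont[OF d lip])
  have phim[measurable]: "\<phi> \<in> borel_measurable borel" by (rule borel_measurable_continuous_onI[OF cont])
  have isc: "isCont \<phi> x" for x using cont by (simp add: continuous_on_eq_continuous_at)
  define \<mu> where "\<mu> = expectation (\<lambda>\<omega>. \<phi> (zf a 0 (Ev \<omega>)))"
  have mu1: "\<mu> = expectation (\<lambda>\<omega>. \<phi> (zf a 1 (Ev \<omega>)))"
  proof -
    have "expectation (\<lambda>\<omega>. \<phi> (zf a 0 ((shiftS ^^ 1) (Ev \<omega>)))) = expectation (\<lambda>\<omega>. \<phi> (zf a 0 (Ev \<omega>)))"
      by (rule integral_stat) measurable
    then show ?thesis unfolding \<mu>_def by (simp add: zf_shift[where s=1, simplified])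
  qed
  define mu where "mu m = expectation (\<lambda>\<omega>. \<phi> (zt a m 1 (Ev \<omega>)))" for m
  define v where "v m e = min 1 (\<bar>zf a 1 e - zt a m 1 e\<bar> / \<delta>)" for m e
  have vm[measurable]: "v m \<in> borel_measurable Sq" for m unfolding v_def by measurable
  have v01: "0 \<le> v m e \<and> v m e \<le> 1" for m e using d unfolding v_def by auto
  define rho where "rho m = expectation (\<lambda>\<omega>. v m (Ev \<omega>))" for m
  have ptw: "AE \<omega> in M. (\<lambda>m. zt a m 1 (Ev \<omega>)) \<longlonglongrightarrow> zf a 1 (Ev \<omega>)"
    using conv1 by (rule AE_mp) (auto intro!: AE_I2 summable_LIMSEQ simp: zt_def zf_def Ev_def)
  have mu_lim: "mu \<longlonglongrightarrow> \<mu>"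
    unfolding mu_def mu1
  proof (rule integral_dominated_convergence[where w="\<lambda>_. 1"])
    show "AE x in M. (\<lambda>i. \<phi> (zt a i 1 (Ev x))) \<longlonglongrightarrow> \<phi> (zf a 1 (Ev x))"
      using ptw by (rule AE_mp) (auto intro!: AE_I2 isCont_tendsto_compose[OF isc])
    show "AE x in M. norm (\<phi> (zt a i 1 (Ev x))) \<le> 1" for i using phi01 by (auto intro!: AE_I2 simp: abs_le_iff)
  qed auto
  have rho_lim: "rho \<longlonglongrightarrow> 0"
  proof -
    have "(\<lambda>m. expectation (\<lambda>\<omega>. v m (Ev \<omega>))) \<longlonglongrightarrow> expectation (\<lambda>\<omega>. 0)"
    proof (rule integral_dominated_convergence[where w="\<lambda>_. 1"])
      show "AE x in M. (\<lambda>i. v i (Ev x)) \<longlonglongrightarrow> 0"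
        using ptw
      proof (rule AE_mp, intro AE_I2 impI)
        fix x assume asm: "(\<lambda>m. zt a m 1 (Ev x)) \<longlonglongrightarrow> zf a 1 (Ev x)"
        have "(\<lambda>m. min 1 (\<bar>zf a 1 (Ev x) - zt a m 1 (Ev x)\<bar> / \<delta>)) \<longlonglongrightarrow> min 1 (\<bar>zf a 1 (Ev x) - zf a 1 (Ev x)\<bar> / \<delta>)"
          using asm d by (intro tendsto_intros) auto
        then show "(\<lambda>i. v i (Ev x)) \<longlonglongrightarrow> 0" by (simp add: v_def)
      qed
      show "AE x in M. norm (v i (Ev x)) \<le> 1" for i using v01 by (auto intro!: AE_I2 simp: abs_le_iff)
    qed auto
    then show ?thesis by (simp add: rho_def[abs_def])
  qed
  define V where "V m k \<omega> = min 1 (\<bar>zf a (int k) (Ev \<omega>) - zt a m (int k) (Ev \<omega>)\<bar> / \<delta>)" for m k \<omega>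
  define H where "H m l = {\<omega>\<in>space M. \<exists>n\<ge>1. (\<Sum>k\<in>{1..n}. V m k \<omega>) > real n * l}" for m l
  have H_sets[measurable]: "H m l \<in> sets M" for m l unfolding H_def V_def by measurable
  have H_bound: "prob (H m l) \<le> rho m / l" if l: "l > 0" for m l
  proof -
    have eq: "v m ((shiftS ^^ k) (Ev \<omega>)) = V m (Suc k) \<omega>" for k \<omega>
      by (simp add: v_def V_def zf_shift zt_shift add.commute)
    have "H m l = {\<omega>\<in>space M. \<exists>n\<ge>1. (\<Sum>k<n. v m ((shiftS ^^ k) (Ev \<omega>))) > real n * l}"
      unfolding H_def eq sum_shift1 ..
    also have "prob \<dots> \<le> rho m / l" unfolding rho_def
      by (rule hopf_M[OF vm v01 l])
    finally show ?thesis .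
  qed
  have phi_diff: "\<bar>\<phi> s - \<phi> t\<bar> \<le> min 1 (\<bar>s - t\<bar> / \<delta>)" for s t
    using lip[of s t] phi01[of s] phi01[of t] by auto
  have main: "AE \<omega> in M. eventually (\<lambda>n. \<bar>(\<Sum>k\<in>{1..n}. \<phi> (zf a (int k) (Ev \<omega>))) / real n - \<mu>\<bar> \<le> e) sequentially"
    if e: "e > 0" for e
  proof -
    have ev1: "eventually (\<lambda>m. \<bar>mu m - \<mu>\<bar> \<le> e / 4) sequentially"
    proof -
      have "eventually (\<lambda>m. dist (mu m) \<mu> < e / 4) sequentially"
        by (rule tendsto_iff[THEN iffD1, OF mu_lim, rule_format]) (use e in simp)
      then show ?thesis by (rule eventually_mono) (auto simp: dist_real_def)
    qed
    have ev2: "eventually (\<lambda>m. rho m / (e / 2) < 1 / Suc j) sequentially" for j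
    proof -
      have "(\<lambda>m. rho m / (e / 2)) \<longlonglongrightarrow> 0 / (e / 2)" by (intro tendsto_intros rho_lim) (use e in auto)
      then have "eventually (\<lambda>m. dist (rho m / (e / 2)) (0 / (e / 2)) < 1 / Suc j) sequentially"
        by (rule tendsto_iff[THEN iffD1, rule_format]) simp
      then show ?thesis by (rule eventually_mono) (metis abs_ge_self dist_real_def diff_zero div_0 le_less_trans)
    qed
    have "\<exists>m. m \<ge> 1 \<and> \<bar>mu m - \<mu>\<bar> \<le> e / 4 \<and> rho m / (e / 2) < 1 / Suc j" for j
    proof -
      have "eventually (\<lambda>m. m \<ge> 1 \<and> \<bar>mu m - \<mu>\<bar> \<le> e / 4 \<and> rho m / (e / 2) < 1 / Suc j) sequentially"
        using ev1 ev2[of j] eventually_ge_at_top[of 1] by eventually_elim auto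
      then show ?thesis by (rule eventually_happens'[OF sequentially_bot])
    qed
    then obtain mm where mm: "\<And>j. mm j \<ge> 1" "\<And>j. \<bar>mu (mm j) - \<mu>\<bar> \<le> e / 4" "\<And>j. rho (mm j) / (e / 2) < 1 / Suc j"
      by metis
    have good: "AE \<omega> in M. \<omega> \<notin> H (mm j) (e / 2) \<longrightarrow>
                  eventually (\<lambda>n. \<bar>(\<Sum>k\<in>{1..n}. \<phi> (zf a (int k) (Ev \<omega>))) / real n - \<mu>\<bar> \<le> e) sequentially" for j
    proof -
      let ?m = "mm j"
      have "AE \<omega> in M. eventually (\<lambda>n. \<bar>(\<Sum>k\<in>{1..n}. \<phi> (zt a ?m (int k) (Ev \<omega>))) - real n * mu ?m\<bar> < real n * (e / 4)) sequentially"
        by (rule mdep_slln[OF phim phi01 mm(1)]) (use e in \<open>auto simp: mu_def\<close>)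
      then show ?thesis
      proof (rule AE_mp, intro AE_I2 impI)
        fix \<omega> assume w: "\<omega> \<in> space M" "\<omega> \<notin> H ?m (e / 2)"
          and ev: "eventually (\<lambda>n. \<bar>(\<Sum>k\<in>{1..n}. \<phi> (zt a ?m (int k) (Ev \<omega>))) - real n * mu ?m\<bar> < real n * (e / 4)) sequentially"
        have Vb: "(\<Sum>k\<in>{1..n}. V ?m k \<omega>) \<le> real n * (e / 2)" if "n \<ge> 1" for n
          using w that unfolding H_def by (auto simp: not_less)
        show "eventually (\<lambda>n. \<bar>(\<Sum>k\<in>{1..n}. \<phi> (zf a (int k) (Ev \<omega>))) / real n - \<mu>\<bar> \<le> e) sequentially"
          using ev eventually_ge_at_top[of 1]
        proof eventually_elim
          case (elim n)
          have npos: "real n > 0" using elim by simp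
          have "\<bar>(\<Sum>k\<in>{1..n}. \<phi> (zf a (int k) (Ev \<omega>))) - (\<Sum>k\<in>{1..n}. \<phi> (zt a ?m (int k) (Ev \<omega>)))\<bar>
                \<le> (\<Sum>k\<in>{1..n}. V ?m k \<omega>)"
          proof -
            have "\<bar>(\<Sum>k\<in>{1..n}. \<phi> (zf a (int k) (Ev \<omega>))) - (\<Sum>k\<in>{1..n}. \<phi> (zt a ?m (int k) (Ev \<omega>)))\<bar>
                = \<bar>\<Sum>k\<in>{1..n}. \<phi> (zf a (int k) (Ev \<omega>)) - \<phi> (zt a ?m (int k) (Ev \<omega>))\<bar>"
              by (simp add: sum_subtractf)
            also have "\<dots> \<le> (\<Sum>k\<in>{1..n}. \<bar>\<phi> (zf a (int k) (Ev \<omega>)) - \<phi> (zt a ?m (int k) (Ev \<omega>))\<bar>)"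
              by (rule sum_abs)
            also have "\<dots> \<le> (\<Sum>k\<in>{1..n}. V ?m k \<omega>)"
              unfolding V_def by (rule sum_mono) (rule phi_diff)
            finally show ?thesis .
          qed
          moreover have "\<bar>real n * mu ?m - real n * \<mu>\<bar> \<le> real n * (e / 4)"
          proof -
            have "\<bar>real n * mu ?m - real n * \<mu>\<bar> = real n * \<bar>mu ?m - \<mu>\<bar>"
              by (simp add: right_diff_distrib[symmetric] abs_mult)
            also have "\<dots> \<le> real n * (e / 4)" by (rule mult_left_mono[OF mm(2)]) simp
            finally show ?thesis .
          qed
          ultimately have "\<bar>(\<Sum>k\<in>{1..n}. \<phi> (zf a (int k) (Ev \<omega>))) - real n * \<mu>\<bar> \<le> real n * e"
            using Vb[OF elim(2)] elim(1) by arith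
          then have "\<bar>((\<Sum>k\<in>{1..n}. \<phi> (zf a (int k) (Ev \<omega>))) - real n * \<mu>) / real n\<bar> \<le> e"
            using npos by (simp add: divide_le_eq abs_divide mult.commute)
          then show ?case using npos by (simp add: diff_divide_distrib)
        qed
      qed
    qed
    have good_all: "AE \<omega> in M. \<forall>j. \<omega> \<notin> H (mm j) (e / 2) \<longrightarrow>
                  eventually (\<lambda>n. \<bar>(\<Sum>k\<in>{1..n}. \<phi> (zf a (int k) (Ev \<omega>))) / real n - \<mu>\<bar> \<le> e) sequentially"
      unfolding AE_all_countable using good by blast
    define N where "N = (\<Inter>j. H (mm j) (e / 2))"
    have N_sets: "N \<in> sets M" unfolding N_def by measurable
    have "prob N \<le> 1 / Suc j" for j
    proof -
      have "prob N \<le> prob (H (mm j) (e / 2))" unfolding N_def by (rule finite_measure_mono) auto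
      also have "\<dots> \<le> rho (mm j) / (e / 2)" by (rule H_bound) (use e in auto)
      finally show ?thesis using mm(3)[of j] by simp
    qed
    then have "prob N = 0"
    proof -
      assume b: "\<And>j. prob N \<le> 1 / Suc j"
      show "prob N = 0"
      proof (rule ccontr)
        assume "prob N \<noteq> 0"
        then have "prob N > 0" using measure_nonneg[of M N] by linarith
        then obtain j where "inverse (real (Suc j)) < prob N" using ex_inv_Suc by blast
        with b[of j] show False by (simp add: field_simps)
      qed
    qed
    then have "N \<in> null_sets M" using N_sets by (simp add: emeasure_eq_measure null_sets_def)
    then have "AE \<omega> in M. \<omega> \<notin> N" by (rule AE_not_in)
    then show ?thesis using good_all by eventually_elim (auto simp: N_def)
  qed
  have "AE \<omega> in M. \<forall>j. eventually (\<lambda>n. \<bar>(\<Sum>k\<in>{1..n}. \<phi> (zf a (int k) (Ev \<omega>))) / real n - \<mu>\<bar> \<le> 1 / Suc j) sequentially"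
    using main by (simp add: AE_all_countable)
  then show ?thesis unfolding \<mu>_def by (rule AE_mp) (auto intro!: AE_I2 conv_from_eps1)
qed

end

lemma clamp_lip:
  fixes \<delta> c :: real assumes d: "\<delta> > 0"
  shows "\<bar>max 0 (min 1 ((c - s) / \<delta>)) - max 0 (min 1 ((c - t) / \<delta>))\<bar> \<le> \<bar>s - t\<bar> / \<delta>"
proof -
  have clamp: "\<bar>max 0 (min 1 x) - max 0 (min 1 y)\<bar> \<le> \<bar>x - y\<bar>" for x y :: real
    by (auto simp: max_def min_def abs_if)
  have "\<bar>(c - s) / \<delta> - (c - t) / \<delta>\<bar> = \<bar>s - t\<bar> / \<delta>"
    using d by (simp add: diff_divide_distrib[symmetric] abs_divide abs_minus_commute)
  then show ?thesis using clamp[of "(c - s) / \<delta>" "(c - t) / \<delta>"] by simp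
qed

lemma conv_from_eps:
  fixes x :: "nat \<Rightarrow> real"
  assumes a: "\<And>j. eventually (\<lambda>n. \<bar>x n - L\<bar> \<le> 2 / Suc j) sequentially"
  shows "x \<longlonglongrightarrow> L"
proof (rule conv_from_eps1)
  fix k
  have eq: "2 / real (Suc (2 * k + 1)) = 1 / real (Suc k)" by (simp add: field_simps)
  show "eventually (\<lambda>n. \<bar>x n - L\<bar> \<le> 1 / Suc k) sequentially"
    using a[of "2 * k + 1"] by (rule eventually_mono) (use eq in simp)
qed

context lproc
begin

lemma collect_int_space: "{x\<in>space M. P x} \<inter> space M = {x\<in>space M. P x}" by auto

lemma cdf_conv:
  fixes a :: "nat \<Rightarrow> real" and F :: "real \<Rightarrow> real"
  assumes conv1: "AE \<omega> in M. summable (\<lambda>i. a i * eps (1 - int i) \<omega>)"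
    and F: "\<And>y. F y = prob {\<omega>\<in>space M. zf a 0 (Ev \<omega>) \<le> y}"
    and Fc: "isCont F z"
  shows "AE \<omega> in M. (\<lambda>n. (\<Sum>k\<in>{1..n}. if zf a (int k) (Ev \<omega>) \<le> z then 1 else 0) / real n) \<longlonglongrightarrow> F z"
proof -
  have step: "AE \<omega> in M. eventually (\<lambda>n. \<bar>(\<Sum>k\<in>{1..n}. if zf a (int k) (Ev \<omega>) \<le> z then 1 else 0) / real n - F z\<bar> \<le> 2 * e) sequentially"
    if e: "e > 0" for e
  proof -
    obtain \<delta> where d: "\<delta> > 0" and dF: "\<And>y. \<bar>y - z\<bar> \<le> \<delta> \<Longrightarrow> \<bar>F y - F z\<bar> \<le> e"
    proof -
      from Fc e obtain d where "d > 0" "\<And>y. \<bar>y - z\<bar> < d \<Longrightarrow> \<bar>F y - F z\<bar> < e"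
        unfolding continuous_at_eps_delta dist_real_def by metis
      then show ?thesis by (intro that[of "d/2"]) (auto, smt (verit, best) field_sum_of_halves)
    qed
    define up where "up t = max 0 (min 1 ((z + \<delta> - t) / \<delta>))" for t
    define lo where "lo t = max 0 (min 1 ((z - t) / \<delta>))" for t
    have up01: "0 \<le> up t \<and> up t \<le> 1" for t unfolding up_def by auto
    have lo01: "0 \<le> lo t \<and> lo t \<le> 1" for t unfolding lo_def by auto
    have uplip: "\<bar>up s - up t\<bar> \<le> \<bar>s - t\<bar> / \<delta>" for s t unfolding up_def by (rule clamp_lip[OF d])
    have lolip: "\<bar>lo s - lo t\<bar> \<le> \<bar>s - t\<bar> / \<delta>" for s t unfolding lo_def by (rule clamp_lip[OF d])
    have upm[measurable]: "up \<in> borel_measurable borel" unfolding up_def by measurable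
    have lom[measurable]: "lo \<in> borel_measurable borel" unfolding lo_def by measurable
    have ind_up: "(if t \<le> z then 1 else 0) \<le> up t" for t using d unfolding up_def by auto
    have ind_lo: "lo t \<le> (if t \<le> z then 1 else 0)" for t using d unfolding lo_def by (auto simp: divide_le_0_iff)
    have up_ind: "up t \<le> indicator {..z + \<delta>} t" for t using d unfolding up_def by (auto simp: indicator_def divide_le_0_iff)
    have lo_ind: "indicator {..z - \<delta>} t \<le> lo t" for t using d unfolding lo_def by (auto simp: indicator_def field_simps)
    have Zm[measurable]: "(\<lambda>\<omega>. zf a 0 (Ev \<omega>)) \<in> borel_measurable M" by measurable
    have Eup: "expectation (\<lambda>\<omega>. up (zf a 0 (Ev \<omega>))) \<le> F z + e"
    proof -
      have "expectation (\<lambda>\<omega>. up (zf a 0 (Ev \<omega>))) \<le> expectation (\<lambda>\<omega>. indicator {..z + \<delta>} (zf a 0 (Ev \<omega>)))"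
      proof (rule Bochner_Integration.integral_mono)
        show "integrable M (\<lambda>\<omega>. indicator {..z + \<delta>} (zf a 0 (Ev \<omega>)) :: real)"
          by (rule integrable_const_bound[where B=1]) (auto simp: indicator_def)
        show "integrable M (\<lambda>\<omega>. up (zf a 0 (Ev \<omega>)))"
          by (rule integrable_const_bound[where B=1]) (auto intro!: AE_I2 simp: up01 abs_le_iff)
      qed (rule up_ind)
      also have "\<dots> = expectation (indicator {\<omega>\<in>space M. zf a 0 (Ev \<omega>) \<le> z + \<delta>})"
        by (rule Bochner_Integration.integral_cong) (auto simp: indicator_def)
      also have "\<dots> = F (z + \<delta>)" by (simp add: F collect_int_space)
      also have "\<dots> \<le> F z + e" using dF[of "z + \<delta>"] d by auto
      finally show ?thesis .
    qed
    have Elo: "F z - e \<le> expectation (\<lambda>\<omega>. lo (zf a 0 (Ev \<omega>)))"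
    proof -
      have "F z - e \<le> F (z - \<delta>)" using dF[of "z - \<delta>"] d by auto
      also have "\<dots> = expectation (indicator {\<omega>\<in>space M. zf a 0 (Ev \<omega>) \<le> z - \<delta>})"
        by (simp add: F collect_int_space)
      also have "\<dots> = expectation (\<lambda>\<omega>. indicator {..z - \<delta>} (zf a 0 (Ev \<omega>)))"
        by (rule Bochner_Integration.integral_cong) (auto simp: indicator_def)
      also have "\<dots> \<le> expectation (\<lambda>\<omega>. lo (zf a 0 (Ev \<omega>)))"
      proof (rule Bochner_Integration.integral_mono)
        show "integrable M (\<lambda>\<omega>. indicator {..z - \<delta>} (zf a 0 (Ev \<omega>)) :: real)"
          by (rule integrable_const_bound[where B=1]) (auto simp: indicator_def)
        show "integrable M (\<lambda>\<omega>. lo (zf a 0 (Ev \<omega>)))"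
          by (rule integrable_const_bound[where B=1]) (auto intro!: AE_I2 simp: lo01 abs_le_iff)
      qed (rule lo_ind)
      finally show ?thesis .
    qed
    have Aup: "AE \<omega> in M. (\<lambda>n. (\<Sum>k\<in>{1..n}. up (zf a (int k) (Ev \<omega>))) / real n) \<longlonglongrightarrow> expectation (\<lambda>\<omega>. up (zf a 0 (Ev \<omega>)))"
      by (rule slln_lip[OF conv1 d up01 uplip])
    have Alo: "AE \<omega> in M. (\<lambda>n. (\<Sum>k\<in>{1..n}. lo (zf a (int k) (Ev \<omega>))) / real n) \<longlonglongrightarrow> expectation (\<lambda>\<omega>. lo (zf a 0 (Ev \<omega>)))"
      by (rule slln_lip[OF conv1 d lo01 lolip])
    show ?thesis using Aup Alo
    proof eventually_elim
      case (elim \<omega>)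
      have e1: "eventually (\<lambda>n. (\<Sum>k\<in>{1..n}. up (zf a (int k) (Ev \<omega>))) / real n < expectation (\<lambda>\<omega>. up (zf a 0 (Ev \<omega>))) + e) sequentially"
        using elim(1) e by (auto simp: tendsto_iff dist_real_def abs_less_iff elim!: allE[of _ e] eventually_mono)
      have e2: "eventually (\<lambda>n. (\<Sum>k\<in>{1..n}. lo (zf a (int k) (Ev \<omega>))) / real n > expectation (\<lambda>\<omega>. lo (zf a 0 (Ev \<omega>))) - e) sequentially"
        using elim(2) e by (auto simp: tendsto_iff dist_real_def abs_less_iff elim!: allE[of _ e] eventually_mono)
      show ?case using e1 e2 eventually_ge_at_top[of 1]
      proof eventually_elim
        case (elim n)
        have np: "real n > 0" using elim(3) by simp
        have "(\<Sum>k\<in>{1..n}. if zf a (int k) (Ev \<omega>) \<le> z then 1 else 0) \<le> (\<Sum>k\<in>{1..n}. up (zf a (int k) (Ev \<omega>)))"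
          by (rule sum_mono) (rule ind_up)
        then have u: "(\<Sum>k\<in>{1..n}. if zf a (int k) (Ev \<omega>) \<le> z then 1 else 0) / real n \<le> (\<Sum>k\<in>{1..n}. up (zf a (int k) (Ev \<omega>))) / real n"
          using np by (simp add: divide_right_mono)
        have "(\<Sum>k\<in>{1..n}. lo (zf a (int k) (Ev \<omega>))) \<le> (\<Sum>k\<in>{1..n}. if zf a (int k) (Ev \<omega>) \<le> z then 1 else 0)"
          by (rule sum_mono) (rule ind_lo)
        then have l: "(\<Sum>k\<in>{1..n}. lo (zf a (int k) (Ev \<omega>))) / real n \<le> (\<Sum>k\<in>{1..n}. if zf a (int k) (Ev \<omega>) \<le> z then 1 else 0) / real n"
          using np by (simp add: divide_right_mono)
        show ?case using u l elim(1,2) Eup Elo by (simp add: abs_le_iff)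
      qed
    qed
  qed
  have "AE \<omega> in M. \<forall>j. eventually (\<lambda>n. \<bar>(\<Sum>k\<in>{1..n}. if zf a (int k) (Ev \<omega>) \<le> z then 1 else 0) / real n - F z\<bar> \<le> 2 * (1 / Suc j)) sequentially"
    unfolding AE_all_countable by (intro allI step) simp
  then show ?thesis by (rule AE_mp) (auto intro!: AE_I2 conv_from_eps)
qed

end

lemma quantile_bounds:
  fixes G :: "real \<Rightarrow> real"
  assumes mono: "\<And>y y'. y \<le> y' \<Longrightarrow> G y \<le> G y'" and u: "p \<le> G u" and l: "G l < p"
  shows "l \<le> Inf {y. p \<le> G y}" "Inf {y. p \<le> G y} \<le> u"
proof -
  have lb: "l \<le> y" if "p \<le> G y" for y
  proof (rule ccontr)
    assume "\<not> l \<le> y"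
    then have "G y \<le> G l" by (intro mono) simp
    with that l show False by simp
  qed
  show "l \<le> Inf {y. p \<le> G y}"
    by (rule cInf_greatest) (use u lb in auto)
  show "Inf {y. p \<le> G y} \<le> u"
    by (rule cInf_lower) (use u lb in \<open>auto simp: bdd_below_def\<close>)
qed

lemma unif_quant:
  fixes F g :: "real \<Rightarrow> real" and G :: "nat \<Rightarrow> real \<Rightarrow> real"
  assumes Gmono: "\<And>n y y'. y \<le> y' \<Longrightarrow> G n y \<le> G n y'"
    and gmono: "strict_mono g" and gcont: "\<And>x. isCont g x"
    and cd: "c \<le> d"
    and Fmono: "\<And>u v. u \<le> v \<Longrightarrow> F u \<le> F v"
    and Finc: "\<And>u v. c \<le> u \<Longrightarrow> u < v \<Longrightarrow> v \<le> d \<Longrightarrow> F u < F v"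
    and eta: "\<eta> > 0" and left: "\<And>h. 0 < h \<Longrightarrow> h < \<eta> \<Longrightarrow> F (c - h) < F c"
    and right: "\<And>h. 0 < h \<Longrightarrow> h < \<eta> \<Longrightarrow> F d < F (d + h)"
    and convc: "\<And>q. (\<lambda>n. G n (g (c + real_of_rat q))) \<longlonglongrightarrow> F (c + real_of_rat q)"
    and convd: "\<And>q. (\<lambda>n. G n (g (d + real_of_rat q))) \<longlonglongrightarrow> F (d + real_of_rat q)"
  shows "(\<lambda>n. SUP x\<in>{c..d}. \<bar>Inf {y. F x \<le> G n y} - g x\<bar>) \<longlonglongrightarrow> 0"
proof -
  define Q where "Q n x = Inf {y. F x \<le> G n y}" for n x
  have gle: "g s \<le> g t" if "s \<le> t" for s t using gmono that by (simp add: strict_mono_less_eq)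
  have glt: "g s < g t" if "s < t" for s t using gmono that by (simp add: strict_mono_less)
  have core: "eventually (\<lambda>n. \<forall>x\<in>{c..d}. \<bar>Q n x - g x\<bar> < \<epsilon>) sequentially" if e: "\<epsilon> > 0" for \<epsilon>
  proof -
    have "continuous_on {c-1..d+1} g" using gcont by (simp add: continuous_at_imp_continuous_on)
    then have "uniformly_continuous_on {c-1..d+1} g" by (rule compact_uniformly_continuous) simp
    then obtain \<rho> where rho: "\<rho> > 0" "\<And>s t. s \<in> {c-1..d+1} \<Longrightarrow> t \<in> {c-1..d+1} \<Longrightarrow> \<bar>s - t\<bar> < \<rho> \<Longrightarrow> \<bar>g s - g t\<bar> < \<epsilon>"
      unfolding uniformly_continuous_on_def dist_real_def using e by metis
    obtain k where k: "inverse (real (Suc k)) < min \<eta> (min (1/3) (\<rho>/3))"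
      using ex_inv_Suc[of "min \<eta> (min (1/3) (\<rho>/3))"] eta rho by auto
    define hq :: rat where "hq = 1 / of_nat (Suc k)"
    define h where "h = real_of_rat hq"
    have h_eq: "h = inverse (real (Suc k))" unfolding h_def hq_def by (simp add: of_rat_divide inverse_eq_divide of_rat_add of_rat_of_nat_eq)
    have h0: "h > 0" and h_eta: "h < \<eta>" and h3: "3 * h < 1" and hrho: "3 * h < \<rho>"
      using k by (auto simp: h_eq)
    define I where "I = nat \<lfloor>(d - c) / h\<rfloor>"
    have Ih: "real I * h \<le> d - c"
    proof -
      have "real I = of_int \<lfloor>(d - c) / h\<rfloor>" unfolding I_def using cd h0 by simp
      also have "\<dots> \<le> (d - c) / h" by (rule of_int_floor_le)
      finally show ?thesis using h0 by (simp add: pos_le_divide_eq)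
    qed
    have I_ge: "j \<le> I" if "c + real j * h \<le> d" for j
    proof -
      have "real j \<le> (d - c) / h" using that h0 by (simp add: pos_le_divide_eq)
      then have "int j \<le> \<lfloor>(d - c) / h\<rfloor>" by (simp add: le_floor_iff)
      then show ?thesis unfolding I_def by simp
    qed
    define gaps where "gaps = insert (F c - F (c - h)) (insert (F (d + h) - F d)
                          ((\<lambda>i. F (c + real (Suc i) * h) - F (c + real i * h)) ` {i. Suc i \<le> I}))"
    define \<gamma> where "\<gamma> = Min gaps"
    have "finite {i. Suc i \<le> I}" by (rule finite_subset[of _ "{..I}"]) auto
    then have gaps_fin: "finite gaps" unfolding gaps_def by auto
    have gaps_pos: "\<forall>a\<in>gaps. 0 < a"
    proof -
      have "F (c + real i * h) < F (c + real (Suc i) * h)" if "Suc i \<le> I" for i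
      proof (rule Finc)
        show "c \<le> c + real i * h" using h0 by simp
        show "c + real i * h < c + real (Suc i) * h" using h0 by simp
        have "real (Suc i) * h \<le> real I * h" using that h0 by (intro mult_right_mono) auto
        then show "c + real (Suc i) * h \<le> d" using Ih by simp
      qed
      then show ?thesis unfolding gaps_def using left[OF h0 h_eta] right[OF h0 h_eta] by auto
    qed
    have g0: "\<gamma> > 0" unfolding \<gamma>_def using gaps_fin gaps_pos by (simp add: gaps_def Min_gr_iff)
    have gap_le: "\<gamma> \<le> a" if "a \<in> gaps" for a unfolding \<gamma>_def using gaps_fin that by simp
    have gapL: "F (c - h) + \<gamma> \<le> F c" using gap_le[of "F c - F (c - h)"] by (simp add: gaps_def)
    have gapR: "F d + \<gamma> \<le> F (d + h)" using gap_le[of "F (d + h) - F d"] by (simp add: gaps_def)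
    have gapI: "F (c + real i * h) + \<gamma> \<le> F (c + real (Suc i) * h)" if "Suc i \<le> I" for i
      using gap_le[of "F (c + real (Suc i) * h) - F (c + real i * h)"] that by (simp add: gaps_def)
    define T where "T = {c - h, d + h} \<union> (\<lambda>i. c + real i * h) ` {..I}"
    have T_fin: "finite T" unfolding T_def by auto
    have T_conv: "(\<lambda>n. G n (g t)) \<longlonglongrightarrow> F t" if "t \<in> T" for t
    proof -
      have "t = c + real_of_rat (- hq) \<or> t = d + real_of_rat hq \<or> (\<exists>i. t = c + real_of_rat (of_nat i * hq))"
        using that unfolding T_def h_def by (auto simp: of_rat_mult of_rat_minus of_rat_of_nat_eq)
      then show ?thesis using convc convd by auto
    qed
    have ev: "eventually (\<lambda>n. \<forall>t\<in>T. \<bar>G n (g t) - F t\<bar> < \<gamma>) sequentially"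
    proof (rule eventually_ball_finite[OF T_fin], intro ballI)
      fix t assume "t \<in> T"
      have "eventually (\<lambda>n. dist (G n (g t)) (F t) < \<gamma>) sequentially"
        by (rule tendsto_iff[THEN iffD1, OF T_conv[OF \<open>t \<in> T\<close>], rule_format]) (rule g0)
      then show "eventually (\<lambda>n. \<bar>G n (g t) - F t\<bar> < \<gamma>) sequentially"
        by (simp add: dist_real_def)
    qed
    show ?thesis using ev
    proof (rule eventually_mono, intro ballI)
      fix n x assume all: "\<forall>t\<in>T. \<bar>G n (g t) - F t\<bar> < \<gamma>" and x: "x \<in> {c..d}"
      define i where "i = nat \<lfloor>(x - c) / h\<rfloor>"
      have ri: "real i = of_int \<lfloor>(x - c) / h\<rfloor>" unfolding i_def using x h0 by simp
      have i1: "real i \<le> (x - c) / h" unfolding ri by (rule of_int_floor_le)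
      have i2: "(x - c) / h < real i + 1" unfolding ri by (rule real_of_int_floor_add_one_gt)
      have xi1: "c + real i * h \<le> x" using i1 h0 by (simp add: pos_le_divide_eq algebra_simps)
      have xi2: "x < c + (real i + 1) * h" using i2 h0 by (simp add: pos_divide_less_eq algebra_simps)
      have iI: "i \<le> I" by (rule I_ge) (use xi1 x in auto)
      define l where "l = (if 2 \<le> i then c + real (i - 2) * h else c - h)"
      define u where "u = (if c + real (i + 2) * h \<le> d then c + real (i + 2) * h else d + h)"
      have lT: "l \<in> T"
      proof (cases "2 \<le> i")
        case True
        have "c + real (i - 2) * h \<in> (\<lambda>i. c + real i * h) ` {..I}"
          by (rule rev_image_eqI[of "i - 2"]) (use iI in auto)
        then show ?thesis unfolding T_def l_def using True by (intro UnI2) (simp only: if_True)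
      next
        case False
        then show ?thesis unfolding T_def l_def by simp
      qed
      have uT: "u \<in> T"
      proof (cases "c + real (i + 2) * h \<le> d")
        case True
        have "c + real (i + 2) * h \<in> (\<lambda>i. c + real i * h) ` {..I}"
          by (rule rev_image_eqI[of "i + 2"]) (use I_ge[OF True] in auto)
        then show ?thesis unfolding T_def u_def using True by (intro UnI2) (simp only: if_True)
      next
        case False
        then show ?thesis unfolding T_def u_def by simp
      qed
      have Fl: "F l + \<gamma> \<le> F x"
      proof (cases "2 \<le> i")
        case True
        have si: "Suc (i - 2) \<le> I" using True iI by simp
        have "F l + \<gamma> \<le> F (c + real (Suc (i - 2)) * h)" unfolding l_def using True gapI[OF si] by simp
        also have "\<dots> \<le> F x"
        proof (rule Fmono)
          have "real (Suc (i - 2)) \<le> real i" using True by simp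
          then have "real (Suc (i - 2)) * h \<le> real i * h" using h0 by (intro mult_right_mono) auto
          then show "c + real (Suc (i - 2)) * h \<le> x" using xi1 by simp
        qed
        finally show ?thesis .
      next
        case False
        have "c \<le> x" using x by simp
        then have "F c \<le> F x" by (rule Fmono)
        then show ?thesis unfolding l_def using False gapL by simp
      qed
      have Fu: "F x + \<gamma> \<le> F u"
      proof (cases "c + real (i + 2) * h \<le> d")
        case True
        have si: "Suc (i + 1) \<le> I" using I_ge[OF True] by simp
        have "F x \<le> F (c + real (i + 1) * h)" by (rule Fmono) (use xi2 in \<open>simp add: add.commute\<close>)
        also have "\<dots> + \<gamma> \<le> F (c + real (Suc (i + 1)) * h)" using gapI[OF si] by simp
        finally show ?thesis unfolding u_def using True by (simp add: add.commute)
      next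
        case False
        have "F x \<le> F d" by (rule Fmono) (use x in simp)
        then show ?thesis unfolding u_def using False gapR by simp
      qed
      have Gu: "F x \<le> G n (g u)" using all uT Fu by (auto simp: abs_less_iff)
      have Gl: "G n (g l) < F x" using all lT Fl by (auto simp: abs_less_iff)
      have Qb: "g l \<le> Q n x" "Q n x \<le> g u"
        unfolding Q_def using quantile_bounds[where G="G n", OF Gmono Gu Gl] by auto
      have lx: "l < x" "x - l < 3 * h"
      proof -
        show "l < x"
        proof (cases "2 \<le> i")
          case True
          have "real (i - 2) * h < real i * h" using True h0 by (intro mult_strict_right_mono) auto
          then show ?thesis unfolding l_def using True xi1 by simp
        next
          case False
          then show ?thesis unfolding l_def using x h0 by simp
        qed
        show "x - l < 3 * h"
        proof (cases "2 \<le> i")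
          case True
          then show ?thesis unfolding l_def using xi2 by (simp add: of_nat_diff algebra_simps)
        next
          case False
          then have "real i \<le> 1" by simp
          then have b2: "(real i + 1) * h \<le> 2 * h" using h0 by (intro mult_right_mono) auto
          have "l = c - h" unfolding l_def using False by simp
          then show ?thesis using b2 xi2 h0 by linarith
        qed
      qed
      have ux: "x < u" "u - x < 3 * h"
      proof -
        show "x < u" unfolding u_def using xi2 x h0 by (auto simp: algebra_simps)
        show "u - x < 3 * h"
        proof (cases "c + real (i + 2) * h \<le> d")
          case True
          then show ?thesis unfolding u_def using xi1 h0 by (simp add: algebra_simps)
        next
          case False
          then show ?thesis unfolding u_def using xi1 x h0 by (simp add: algebra_simps)
        qed
      qed
      have xr: "x \<in> {c-1..d+1}" using x by simp
      have lr: "l \<in> {c-1..d+1}" using lx x h3 by auto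
      have ur: "u \<in> {c-1..d+1}" using ux x h3 by auto
      have "\<bar>g u - g x\<bar> < \<epsilon>" by (rule rho(2)[OF ur xr]) (use ux hrho in simp)
      moreover have "\<bar>g l - g x\<bar> < \<epsilon>" by (rule rho(2)[OF lr xr]) (use lx hrho in simp)
      moreover have "g l \<le> g x" "g x \<le> g u" using lx ux by (auto intro: gle)
      ultimately show "\<bar>Q n x - g x\<bar> < \<epsilon>" using Qb by (simp add: abs_less_iff)
    qed
  qed
  show ?thesis
    unfolding tendsto_iff dist_real_def
  proof (intro allI impI)
    fix r :: real assume r: "r > 0"
    show "eventually (\<lambda>n. \<bar>(SUP x\<in>{c..d}. \<bar>Inf {y. F x \<le> G n y} - g x\<bar>) - 0\<bar> < r) sequentially"
      using core[of "r/2"] r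
    proof -
      have ev: "eventually (\<lambda>n. \<forall>x\<in>{c..d}. \<bar>Q n x - g x\<bar> < r / 2) sequentially"
        using core[of "r/2"] r by simp
      show ?thesis using ev
      proof (rule eventually_mono)
      fix n assume b: "\<forall>x\<in>{c..d}. \<bar>Q n x - g x\<bar> < r / 2"
      have ne: "{c..d} \<noteq> {}" using cd by simp
      have up: "(SUP x\<in>{c..d}. \<bar>Q n x - g x\<bar>) \<le> r / 2"
        by (rule cSUP_least[OF ne]) (use b in \<open>auto intro: less_imp_le\<close>)
      have bdd: "bdd_above ((\<lambda>x. \<bar>Q n x - g x\<bar>) ` {c..d})"
        using b by (auto simp: bdd_above_def intro!: exI[of _ "r/2"] less_imp_le)
      have lo: "0 \<le> (SUP x\<in>{c..d}. \<bar>Q n x - g x\<bar>)"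
        using cSUP_upper[OF _ bdd, of c] cd by (auto intro: order_trans[OF abs_ge_zero])
      show "\<bar>(SUP x\<in>{c..d}. \<bar>Inf {y. F x \<le> G n y} - g x\<bar>) - 0\<bar> < r"
        using up lo r unfolding Q_def by simp
    qed
    qed
  qed
qed


lemma emp_cdf_mono: "y \<le> y' \<Longrightarrow> emp_cdf Y n y \<le> emp_cdf Y n y'"
  unfolding emp_cdf_def by (intro divide_right_mono sum_mono) auto

lemma main_unif:
  fixes M :: "'w measure"
    and eps :: "int \<Rightarrow> 'w \<Rightarrow> real"
    and f_eps :: "real \<Rightarrow> real"
    and a :: "nat \<Rightarrow> real"
    and Z :: "int \<Rightarrow> 'w \<Rightarrow> real"
    and F_Z f_Z g :: "real \<Rightarrow> real"
  assumes M: "prob_space M"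
    and indep: "prob_space.indep_vars M (\<lambda>_. borel) eps UNIV"
    and eps_density: "\<And>i. distributed M lborel (eps i) (\<lambda>x. ennreal (f_eps x))"
    and Z_def: "\<And>k \<omega>. Z k \<omega> = (\<Sum>i. a i * eps (k - int i) \<omega>)"
    and Z_conv: "\<And>k. AE \<omega> in M. summable (\<lambda>i. a i * eps (k - int i) \<omega>)"
    and F_Z_def: "\<And>x. F_Z x = measure M {\<omega> \<in> space M. Z 0 \<omega> \<le> x}"
    and f_Z_density: "\<And>x. (F_Z has_real_derivative f_Z x) (at x)"
    and g_mono: "strict_mono g"
    and g_diff: "\<And>x. g differentiable (at x)"
    and cd: "c \<le> d" and fpos: "\<And>x. c \<le> x \<Longrightarrow> x \<le> d \<Longrightarrow> f_Z x > 0"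
  shows "AE \<omega> in M. (\<lambda>n. SUP x\<in>{c..d}. \<bar>g_hat (\<lambda>i. g (Z (int i) \<omega>)) F_Z n x - g x\<bar>) \<longlonglongrightarrow> 0"
proof -
  have distr_eq: "distr M borel (eps i) = density lborel (\<lambda>x. ennreal (f_eps x))" for i
  proof -
    have "distr M borel (eps i) = distr M lborel (eps i)" by (rule distr_cong) auto
    also have "\<dots> = density lborel (\<lambda>x. ennreal (f_eps x))"
      using eps_density[of i] unfolding distributed_def by auto
    finally show ?thesis .
  qed
  interpret L: lproc M eps "density lborel (\<lambda>x. ennreal (f_eps x))"
    by (rule lproc.intro[OF M indep distr_eq])
  have ZE: "Z k \<omega> = zf a k (L.Ev \<omega>)" for k \<omega> by (simp add: Z_def zf_def L.Ev_def)
  have conv1: "AE \<omega> in M. summable (\<lambda>i. a i * eps (1 - int i) \<omega>)" by (rule Z_conv)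
  have F: "F_Z y = measure M {\<omega>\<in>space M. zf a 0 (L.Ev \<omega>) \<le> y}" for y by (simp add: F_Z_def ZE)
  have Fc: "isCont F_Z z" for z by (rule DERIV_isCont[OF f_Z_density])
  have Fmono: "F_Z u \<le> F_Z v" if "u \<le> v" for u v
    unfolding F using that by (intro L.finite_measure_mono) auto
  have Finc: "F_Z u < F_Z v" if "c \<le> u" "u < v" "v \<le> d" for u v
    by (rule DERIV_pos_imp_increasing[OF that(2)]) (use that f_Z_density fpos in force)
  obtain \<eta>1 where e1: "\<eta>1 > 0" "\<And>h. h > 0 \<Longrightarrow> h < \<eta>1 \<Longrightarrow> F_Z (c - h) < F_Z c"
    using DERIV_pos_inc_left[OF f_Z_density fpos[of c]] cd by auto
  obtain \<eta>2 where e2: "\<eta>2 > 0" "\<And>h. h > 0 \<Longrightarrow> h < \<eta>2 \<Longrightarrow> F_Z d < F_Z (d + h)"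
    using DERIV_pos_inc_right[OF f_Z_density fpos[of d]] cd by auto
  have gc: "isCont g x" for x using g_diff[of x] by (simp add: differentiable_imp_continuous_within)
  have link: "emp_cdf (\<lambda>i. g (Z (int i) \<omega>)) n (g z)
      = (\<Sum>k\<in>{1..n}. if zf a (int k) (L.Ev \<omega>) \<le> z then 1 else 0) / real n" for \<omega> n z
    unfolding emp_cdf_def ZE using g_mono by (simp add: strict_mono_less_eq)
  have cdf: "AE \<omega> in M. (\<lambda>n. emp_cdf (\<lambda>i. g (Z (int i) \<omega>)) n (g z)) \<longlonglongrightarrow> F_Z z" for z
    unfolding link by (rule L.cdf_conv[OF conv1 F Fc])
  have "AE \<omega> in M. \<forall>q::rat. (\<lambda>n. emp_cdf (\<lambda>i. g (Z (int i) \<omega>)) n (g (c + real_of_rat q))) \<longlonglongrightarrow> F_Z (c + real_of_rat q)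
                      \<and> (\<lambda>n. emp_cdf (\<lambda>i. g (Z (int i) \<omega>)) n (g (d + real_of_rat q))) \<longlonglongrightarrow> F_Z (d + real_of_rat q)"
    unfolding AE_all_countable using cdf by (auto intro: AE_conjI)
  then show ?thesis
  proof (rule AE_mp, intro AE_I2 impI)
    fix \<omega> assume all: "\<forall>q::rat. (\<lambda>n. emp_cdf (\<lambda>i. g (Z (int i) \<omega>)) n (g (c + real_of_rat q))) \<longlonglongrightarrow> F_Z (c + real_of_rat q)
                      \<and> (\<lambda>n. emp_cdf (\<lambda>i. g (Z (int i) \<omega>)) n (g (d + real_of_rat q))) \<longlonglongrightarrow> F_Z (d + real_of_rat q)"
    have "(\<lambda>n. SUP x\<in>{c..d}. \<bar>Inf {y. F_Z x \<le> emp_cdf (\<lambda>i. g (Z (int i) \<omega>)) n y} - g x\<bar>) \<longlonglongrightarrow> 0"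
    proof (rule unif_quant[where \<eta>="min \<eta>1 \<eta>2"])
      show "\<And>n y y'. y \<le> y' \<Longrightarrow> emp_cdf (\<lambda>i. g (Z (int i) \<omega>)) n y \<le> emp_cdf (\<lambda>i. g (Z (int i) \<omega>)) n y'"
        by (rule emp_cdf_mono)
    qed (use g_mono gc cd Fmono Finc e1 e2 all in auto)
    then show "(\<lambda>n. SUP x\<in>{c..d}. \<bar>g_hat (\<lambda>i. g (Z (int i) \<omega>)) F_Z n x - g x\<bar>) \<longlonglongrightarrow> 0"
      by (simp add: g_hat_def emp_quantile_def)
  qed
qed

theorem theorem5:
  fixes M :: "'w measure"
    and eps :: "int \<Rightarrow> 'w \<Rightarrow> real"
    and f_eps :: "real \<Rightarrow> real"
    and a :: "nat \<Rightarrow> real"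
    and Z :: "int \<Rightarrow> 'w \<Rightarrow> real"
    and F_Z f_Z g :: "real \<Rightarrow> real"
  assumes M: "prob_space M"
    and indep: "prob_space.indep_vars M (\<lambda>_. borel) eps UNIV"
    and f_eps_nonneg: "\<And>x. f_eps x \<ge> 0"
    and eps_density: "\<And>i. distributed M lborel (eps i) (\<lambda>x. ennreal (f_eps x))"
    and Z_def: "\<And>k \<omega>. Z k \<omega> = (\<Sum>i. a i * eps (k - int i) \<omega>)"
    and Z_conv: "\<And>k. AE \<omega> in M. summable (\<lambda>i. a i * eps (k - int i) \<omega>)"
    and F_Z_def: "\<And>x. F_Z x = measure M {\<omega> \<in> space M. Z 0 \<omega> \<le> x}"
    and f_Z_density: "\<And>x. (F_Z has_real_derivative f_Z x) (at x)"
    and g_mono: "strict_mono g"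
    and g_diff: "\<And>x. g differentiable (at x)"
  shows
    "((\<forall>x. f_eps differentiable (at x)) \<and>
      (\<exists>B. \<forall>x. f_eps x + \<bar>deriv f_eps x\<bar> \<le> B) \<longrightarrow>
      (\<forall>\<alpha> q. \<alpha> > 0 \<and> q > 2 \<and>
         (\<forall>k. integrable M (\<lambda>\<omega>. \<bar>eps k \<omega>\<bar> powr \<alpha>)) \<and>
         summable (\<lambda>i. \<bar>a i\<bar> powr min (\<alpha> / q) 1) \<and>
         (\<lambda>n. \<Sum>i. \<bar>a (i + n)\<bar> powr min (\<alpha> / q) 1)
            \<in> O(\<lambda>n. ln (real n) powr (- 1 / q))
       \<longrightarrow> (\<forall>x. f_Z x > 0 \<longrightarrow>
              (AE \<omega> in M. (\<lambda>n. g_hat (\<lambda>i. g (Z (int i) \<omega>)) F_Z n x) \<longlonglongrightarrow> g x))))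
     \<and>
     ((\<exists>f'. (\<forall>x. (f_eps has_real_derivative f' x) (at x)) \<and>
            (\<forall>x. f' differentiable (at x)) \<and>
            (\<exists>B. \<forall>x. \<bar>deriv f' x\<bar> \<le> B)) \<longrightarrow>
      (\<forall>\<alpha> q c d. \<alpha> > 0 \<and> q \<ge> 2 \<and>
         (\<forall>k. integrable M (\<lambda>\<omega>. \<bar>eps k \<omega>\<bar> powr \<alpha>)) \<and>
         summable (\<lambda>i. \<bar>a (Suc i)\<bar> powr min (\<alpha> / q) 1) \<and>
         c \<le> d \<and> (INF x\<in>{c..d}. f_Z x) > 0
       \<longrightarrow> (AE \<omega> in M. (\<lambda>n. SUP x\<in>{c..d}.
                \<bar>g_hat (\<lambda>i. g (Z (int i) \<omega>)) F_Z n x - g x\<bar>) \<longlonglongrightarrow> 0)))"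
proof -
  interpret prob_space M by (rule M)
  have epsm[measurable]: "eps i \<in> borel_measurable M" for i using indep unfolding indep_vars_def by auto
  have Zeq: "Z k = (\<lambda>\<omega>. \<Sum>i. a i * eps (k - int i) \<omega>)" for k by (rule ext) (rule Z_def)
  have Zm[measurable]: "Z k \<in> borel_measurable M" for k unfolding Zeq by measurable
  have Fmono: "F_Z u \<le> F_Z v" if "u \<le> v" for u v
    unfolding F_Z_def using that by (intro finite_measure_mono) auto
  have fnn: "f_Z x \<ge> 0" for x
  proof (rule ccontr)
    assume "\<not> f_Z x \<ge> 0"
    then obtain e where e: "e > 0" "\<And>h. h > 0 \<Longrightarrow> h < e \<Longrightarrow> F_Z x > F_Z (x + h)"
      using DERIV_neg_dec_right[OF f_Z_density, of x] by force
    have "F_Z x > F_Z (x + e / 2)" using e by simp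
    moreover have "F_Z x \<le> F_Z (x + e / 2)" using e by (intro Fmono) simp
    ultimately show False by simp
  qed
  note U = main_unif[OF M indep eps_density Z_def Z_conv F_Z_def f_Z_density g_mono g_diff]
  show ?thesis
  proof (intro conjI impI allI)
    fix x :: real assume fx: "f_Z x > 0"
    have "AE \<omega> in M. (\<lambda>n. SUP y\<in>{x..x}. \<bar>g_hat (\<lambda>i. g (Z (int i) \<omega>)) F_Z n y - g y\<bar>) \<longlonglongrightarrow> 0"
      by (rule U) (use fx in auto)
    then show "AE \<omega> in M. (\<lambda>n. g_hat (\<lambda>i. g (Z (int i) \<omega>)) F_Z n x) \<longlonglongrightarrow> g x"
    proof (rule AE_mp, intro AE_I2 impI)
      fix \<omega> assume "(\<lambda>n. SUP y\<in>{x..x}. \<bar>g_hat (\<lambda>i. g (Z (int i) \<omega>)) F_Z n y - g y\<bar>) \<longlonglongrightarrow> 0"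
      then have "(\<lambda>n. \<bar>g_hat (\<lambda>i. g (Z (int i) \<omega>)) F_Z n x - g x\<bar>) \<longlonglongrightarrow> 0" by simp
      then have "(\<lambda>n. g_hat (\<lambda>i. g (Z (int i) \<omega>)) F_Z n x - g x) \<longlonglongrightarrow> 0"
        by (simp add: tendsto_rabs_zero_iff)
      then show "(\<lambda>n. g_hat (\<lambda>i. g (Z (int i) \<omega>)) F_Z n x) \<longlonglongrightarrow> g x"
        by (simp add: LIM_zero_iff)
    qed
  next
    fix \<alpha> q c d :: real
    assume H: "0 < \<alpha> \<and> 2 \<le> q \<and> (\<forall>k. integrable M (\<lambda>\<omega>. \<bar>eps k \<omega>\<bar> powr \<alpha>)) \<and>
         summable (\<lambda>i. \<bar>a (Suc i)\<bar> powr min (\<alpha> / q) 1) \<and> c \<le> d \<and> 0 < (INF x\<in>{c..d}. f_Z x)"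
    have bdd: "bdd_below (f_Z ` {c..d})" using fnn by (auto simp: bdd_below_def)
    show "AE \<omega> in M. (\<lambda>n. SUP x\<in>{c..d}. \<bar>g_hat (\<lambda>i. g (Z (int i) \<omega>)) F_Z n x - g x\<bar>) \<longlonglongrightarrow> 0"
    proof (rule U)
      show "c \<le> d" using H by simp
      fix x assume "c \<le> x" "x \<le> d"
      then have "(INF x\<in>{c..d}. f_Z x) \<le> f_Z x" by (intro cINF_lower[OF bdd]) auto
      then show "f_Z x > 0" using H by linarith
    qed
  qed
qed

end
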